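(* Consider a D2D caching network with $K$ users each of cache size $M$ files, of which $S$ are selfish, and a library of $N$ files, encoded with an MDS code of rate $r\in(0,1)$ that is a real positive root of $\sum_{i=0}^{K-S-1}\binom{K-S}{i}(-\frac{M}{N})^{K-S-i}r^{K-S-1-i}+1$ (with $\frac{M(K-S)}{N}>1$), using the random caching scheme and delivery procedure described in the context. Then the following rate is achievable: $$R(M)=\frac{1}{r}\sum_{i=2}^{K}\mathsf{R}(i)\Big(\frac{Mr}{N}\Big)^{i-1}\Big(1-\frac{Mr}{N}\Big)^{K-i+1},$$ where $$\mathsf{R}(i)=\sum_{j=0}^{i-2}\binom{S}{j}\binom{K-S}{i-j}\frac{i-j}{i-j-1}+(K-S)\binom{S}{i-1}.$$
   Context: Network: $K$ users in mutual range, no server; $S$ selfish users cache content but never transmit; all users receive all transmissions; each user $u$ requests an arbitrary file $\omega_u$ (arbitrary request vector). Rate = total number of transmitted bits divided by the file size $B$. Caching: each file of $B$ bits is split into $I$ subfiles (symbols of $\mathbb{F}_{2^{B/I}}$) and encoded with an $(I,I/r)$ MDS code (any $I$ of the $I/r$ encoded symbols recover the file); each user independently, for each file, caches a uniformly random set of $MI/N$ of the $I/r$ encoded symbols. For a file $\omega$ and a set $\mathcal{P}$ of users, $\Gamma_{\omega,\mathcal{P}}$ denotes the block of encoded symbols of $\omega$ cached by exactly the users in $\mathcal{P}$; its length is taken to be its typical value $(\frac{Mr}{N})^{|\mathcal{P}|}(1-\frac{Mr}{N})^{K-|\mathcal{P}|}\frac{I}{r}$ symbols (law of large numbers, large $I$).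 XOR of blocks of unequal length is done after zero-padding the shorter ones. A $\frac1f$-segment of a block is one of $f$ disjoint equal-length parts; segments sent by different users are disjoint if they have different offsets. Delivery: for every subset $\mathsf{U}\subseteq\mathcal{U}$ with $|\mathsf{U}|\in\{K,K-1,\dots,2\}$ containing at least one non-selfish user, let $\mathcal{T}$ be its set of non-selfish users, $\mathsf{t}=|\mathcal{T}|$. If $\mathsf{t}=1$, the unique $u\in\mathcal{T}$ transmits $\bigoplus_{v\in\mathsf{U},v\ne u}\Gamma_{\omega_v,\mathsf{U}\setminus\{v\}}$. If $\mathsf{t}\ge2$, pick any $u^*\in\mathcal{T}$; $u^*$ transmits a disjoint $\frac{1}{\mathsf{t}-1}$-segment of $\bigoplus_{u\in\mathcal{T},u\ne u^*}\Gamma_{\omega_u,\mathsf{U}\setminus\{u\}}$, and each $u\in\mathcal{T}\setminus\{u^*\}$ transmits a disjoint $\frac{1}{\mathsf{t}-1}$-segment of $\bigoplus_{v\in\mathsf{U},v\ne u}\Gamma_{\omega_v,\mathsf{U}\setminus\{v\}}$. Achievability means that with this scheme every user recovers its requested file for every request vector, with total rate $R(M)$. *)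

theory Defs
  imports Main Complex_Main
begin

text \<open>
D2D coded caching with selfish users, in the typical-length (law of large
numbers) idealisation fixed in the paper.
A block is identified by a file and the exact set P of users caching it.
A piece (f, P, n, o) is the o-th of n disjoint equal-length segments of the
block Gamma_{f,P} (n = 1, o = 0 is the whole block).  A transmission is the
XOR (after zero padding) of a finite set of pieces.
\<close>

type_synonym piece = "nat \<times> nat set \<times> nat \<times> nat"

text \<open>Typical length (in encoded symbols) of block Gamma_{f,P}; q = M r / N.\<close>
definition blen :: "nat \<Rightarrow> real \<Rightarrow> real \<Rightarrow> nat \<Rightarrow> nat set \<Rightarrow> real" where
  "blen K q r I P = q ^ card P * (1 - q) ^ (K - card P) * real I / r"

definition plen :: "nat \<Rightarrow> real \<Rightarrow> real \<Rightarrow> nat \<Rightarrow> piece \<Rightarrow> real" where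
  "plen K q r I p = (case p of (f, P, n, k) \<Rightarrow> blen K q r I P / real n)"

text \<open>Length of a transmission (XOR with zero padding of its pieces).\<close>
definition mlen :: "nat \<Rightarrow> real \<Rightarrow> real \<Rightarrow> nat \<Rightarrow> piece set \<Rightarrow> real" where
  "mlen K q r I m = Max (plen K q r I ` m)"

definition tx_index :: "nat \<Rightarrow> nat set \<Rightarrow> (nat set \<times> nat) set" where
  "tx_index K Sf = {(U, u). U \<subseteq> {..<K} \<and> 2 \<le> card U \<and> u \<in> U - Sf}"

text \<open>The transmission of user u for the subset U. ustar chooses u* from T;
off U u is the offset of the segment sent by u \<in> T - {u*};
cof U w is the offset of the segment of the component of user w in the XOR sent by u*.\<close>
definition msg :: "nat set \<Rightarrow> (nat \<Rightarrow> nat) \<Rightarrow> (nat set \<Rightarrow> nat) \<Rightarrow>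
    (nat set \<Rightarrow> nat \<Rightarrow> nat) \<Rightarrow> (nat set \<Rightarrow> nat \<Rightarrow> nat) \<Rightarrow> nat set \<Rightarrow> nat \<Rightarrow> piece set" where
  "msg Sf \<omega> ustar off cof U u =
    (let T = U - Sf; t = card T in
     if t = 1 then {(\<omega> v, U - {v}, 1, 0) | v. v \<in> U \<and> v \<noteq> u}
     else if u = ustar T then {(\<omega> w, U - {w}, t - 1, cof U w) | w. w \<in> T \<and> w \<noteq> u}
     else {(\<omega> v, U - {v}, t - 1, off U u) | v. v \<in> U \<and> v \<noteq> u})"

definition valid_offsets :: "nat \<Rightarrow> nat set \<Rightarrow> (nat set \<Rightarrow> nat) \<Rightarrow>
    (nat set \<Rightarrow> nat \<Rightarrow> nat) \<Rightarrow> (nat set \<Rightarrow> nat \<Rightarrow> nat) \<Rightarrow> bool" where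
  "valid_offsets K Sf ustar off cof \<longleftrightarrow>
    (\<forall>U. U \<subseteq> {..<K} \<and> 2 \<le> card U \<and> 2 \<le> card (U - Sf) \<longrightarrow>
       inj_on (off U) (U - Sf - {ustar (U - Sf)}) \<and>
       (\<forall>u \<in> U - Sf - {ustar (U - Sf)}. off U u < card (U - Sf) - 1 \<and> cof U u < card (U - Sf) - 1))"

inductive knows :: "piece set set \<Rightarrow> nat \<Rightarrow> piece \<Rightarrow> bool" for Msgs u where
  cached: "u \<in> P \<Longrightarrow> k < n \<Longrightarrow> knows Msgs u (f, P, n, k)"
| decode: "m \<in> Msgs \<Longrightarrow> p \<in> m \<Longrightarrow> (\<forall>p' \<in> m - {p}. knows Msgs u p') \<Longrightarrow> knows Msgs u p"

definition recovered :: "piece set set \<Rightarrow> nat \<Rightarrow> nat \<Rightarrow> nat set \<Rightarrow> bool" where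
  "recovered Msgs u f P \<longleftrightarrow> (\<exists>n > 0. \<forall>k < n. knows Msgs u (f, P, n, k))"

text \<open>MDS decoding: file f is recovered iff at least I encoded symbols of f are known.\<close>
definition decodes :: "nat \<Rightarrow> real \<Rightarrow> real \<Rightarrow> nat \<Rightarrow> piece set set \<Rightarrow> nat \<Rightarrow> nat \<Rightarrow> bool" where
  "decodes K q r I Msgs u f \<longleftrightarrow>
     real I \<le> (\<Sum>P \<in> {P. P \<subseteq> {..<K} \<and> recovered Msgs u f P}. blen K q r I P)"

text \<open>Rate of the scheme: total transmitted symbols divided by I (file = I symbols).\<close>
definition scheme_rate :: "nat \<Rightarrow> real \<Rightarrow> real \<Rightarrow> nat \<Rightarrow> nat set \<Rightarrow> (nat \<Rightarrow> nat) \<Rightarrow>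
    (nat set \<Rightarrow> nat) \<Rightarrow> (nat set \<Rightarrow> nat \<Rightarrow> nat) \<Rightarrow> (nat set \<Rightarrow> nat \<Rightarrow> nat) \<Rightarrow> real" where
  "scheme_rate K q r I Sf \<omega> ustar off cof =
     (\<Sum>(U, u) \<in> tx_index K Sf. mlen K q r I (msg Sf \<omega> ustar off cof U u)) / real I"

definition Rsf :: "nat \<Rightarrow> nat \<Rightarrow> nat \<Rightarrow> real" where
  "Rsf K S i = (\<Sum>j = 0..i-2. real (S choose j) * real ((K - S) choose (i - j))
                   * real (i - j) / real (i - j - 1))
               + real (K - S) * real (S choose (i - 1))"

definition Rach :: "nat \<Rightarrow> nat \<Rightarrow> real \<Rightarrow> nat \<Rightarrow> real \<Rightarrow> real" where
  "Rach K S M N r = (1 / r) * (\<Sum>i = 2..K. Rsf K S i * (M * r / real N) ^ (i - 1)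
                                  * (1 - M * r / real N) ^ (K - i + 1))"

end

theory Submission
  imports Defs
begin



lemma pow_binom:
  fixes a b :: real
  assumes "finite A"
  shows "(\<Sum>P\<in>Pow A. a ^ card P * b ^ (card A - card P)) = (a + b) ^ card A"
proof -
  have "(a+b) ^ card A = (\<Prod>x\<in>A. a + b)" by simp
  also have "\<dots> = (\<Sum>X\<in>Pow A. (\<Prod>x\<in>X. a) * (\<Prod>x\<in>A-X. b))"
    by (rule prod_add[OF assms])
  also have "\<dots> = (\<Sum>P\<in>Pow A. a ^ card P * b ^ (card A - card P))"
    apply (rule sum.cong, simp)
    using assms by (auto simp: card_Diff_subset finite_subset)
  finally show ?thesis by simp
qed

lemma root_eq:
  fixes a r :: real and m :: nat
  assumes "m > 0"
    and h: "(\<Sum>i = 0..<m. real (m choose i) * (- a) ^ (m - i) * r ^ (m - 1 - i)) + 1 = 0"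
  shows "(1 - a * r) ^ m = 1 - r"
proof -
  have e1: "r * (\<Sum>i = 0..<m. real (m choose i) * (- a) ^ (m - i) * r ^ (m - 1 - i))
       = (\<Sum>i = 0..<m. real (m choose i) * (- a * r) ^ (m - i))"
    unfolding sum_distrib_left
  proof (rule sum.cong, simp)
    fix i assume "i \<in> {0..<m}"
    then have "m - i = Suc (m - 1 - i)" by auto
    have pm: "(- a * r) ^ (m - i) = (- a) ^ (m - i) * r ^ (m - i)"
      by (metis power_mult_distrib)
    show "r * (real (m choose i) * (- a) ^ (m - i) * r ^ (m - 1 - i)) =
         real (m choose i) * (- a * r) ^ (m - i)"
      unfolding pm using \<open>m - i = Suc (m - 1 - i)\<close> by simp
  qed
  have "(1 - a*r) ^ m = ((-a*r) + 1) ^ m" by simp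
  also have "\<dots> = (\<Sum>k\<le>m. real (m choose k) * (-a*r)^k * 1^(m-k))"
    by (rule binomial_ring)
  also have "\<dots> = (\<Sum>k\<le>m. real (m choose k) * (-a*r)^(m-k))"
  proof -
    have "(\<Sum>k\<le>m. real (m choose k) * (-a*r)^k * 1^(m-k)) = (\<Sum>k\<le>m. real (m choose (m - k)) * (-a*r)^(m - k))"
      by (rule sum.reindex_bij_witness[where i="\<lambda>k. m - k" and j="\<lambda>k. m - k"]) auto
    also have "\<dots> = (\<Sum>k\<le>m. real (m choose k) * (-a*r)^(m-k))"
      by (rule sum.cong) (auto simp: binomial_symmetric[symmetric])
    finally show ?thesis .
  qed
  also have "\<dots> = (\<Sum>k=0..<m. real (m choose k) * (-a*r)^(m-k)) + 1"
  proof -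
    obtain m' where m: "m = Suc m'" using assms(1) by (cases m) auto
    have "{0..<m} = {..m'}" using m by auto
    then show ?thesis unfolding m by (simp only: sum.atMost_Suc) simp
  qed
  also have "\<dots> = 1 - r" proof -
    have "r * ((\<Sum>i = 0..<m. real (m choose i) * (- a) ^ (m - i) * r ^ (m - 1 - i)) + 1) = 0" using h by simp
    then show ?thesis using e1 by (simp add: algebra_simps)
  qed
  finally show ?thesis .
qed



lemma rank_lt:
  fixes A :: "nat set" assumes "finite A" "u \<in> A"
  shows "card {v\<in>A. v<u} < card A"
  by (rule psubset_card_mono) (use assms in auto)

lemma rank_inj:
  fixes A :: "nat set" assumes "finite A"
  shows "inj_on (\<lambda>u. card {v\<in>A. v<u}) A"
proof -
  have "card {v\<in>A. v<u} < card {v\<in>A. v<u'}" if "u \<in> A" "u < u'" for u u'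
    by (rule psubset_card_mono) (use assms that in auto)
  note lt = this
  show ?thesis unfolding inj_on_def
  proof (intro ballI impI)
    fix x y assume xy: "x \<in> A" "y \<in> A" "card {v\<in>A. v<x} = card {v\<in>A. v<y}"
    show "x = y"
    proof (rule ccontr)
      assume "x \<noteq> y"
      then have "x < y \<or> y < x" by arith
      then show False using lt[of x y] lt[of y x] xy by auto
    qed
  qed
qed

lemma rank_surj:
  fixes A :: "nat set" assumes "finite A"
  shows "(\<lambda>u. card {v\<in>A. v<u}) ` A = {..<card A}"
proof -
  have s: "(\<lambda>u. card {v\<in>A. v<u}) ` A \<subseteq> {..<card A}" using rank_lt[OF assms] by auto
  have "card ((\<lambda>u. card {v\<in>A. v<u}) ` A) = card A"
    by (rule card_image[OF rank_inj[OF assms]])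
  then show ?thesis using s by (intro card_subset_eq) auto
qed

lemma count_split:
  fixes A X :: "'a set"
  assumes "finite X" "A \<subseteq> X" "j \<le> i"
  shows "card {U. U \<subseteq> X \<and> card U = i \<and> card (U \<inter> A) = j}
       = (card A choose j) * (card (X - A) choose (i - j))"
proof -
  have fA: "finite A" using assms(1,2) by (rule finite_subset[rotated])
  have fXA: "finite (X - A)" using assms by auto
  let ?L = "{Y. Y \<subseteq> A \<and> card Y = j} \<times> {Z. Z \<subseteq> X - A \<and> card Z = i - j}"
  have "bij_betw (\<lambda>(Y,Z). Y \<union> Z) ?L {U. U \<subseteq> X \<and> card U = i \<and> card (U \<inter> A) = j}"
  proof (rule bij_betw_byWitness[where f'="\<lambda>U. (U \<inter> A, U - A)"])
    show "\<forall>a\<in>?L. (\<lambda>U. (U \<inter> A, U - A)) (case a of (Y, Z) \<Rightarrow> Y \<union> Z) = a" by auto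
    show "\<forall>a'\<in>{U. U \<subseteq> X \<and> card U = i \<and> card (U \<inter> A) = j}.
       (case (a' \<inter> A, a' - A) of (Y, Z) \<Rightarrow> Y \<union> Z) = a'" by auto
    show "(\<lambda>(Y, Z). Y \<union> Z) ` ?L \<subseteq> {U. U \<subseteq> X \<and> card U = i \<and> card (U \<inter> A) = j}"
    proof
      fix x assume "x \<in> (\<lambda>(Y, Z). Y \<union> Z) ` ?L"
      then obtain Y Z where a: "Y \<subseteq> A" "Z \<subseteq> X - A" "j = card Y" "card Z = i - card Y" and x: "x = Y \<union> Z"
        by auto
      have fY: "finite Y" "finite Z" using a fA fXA by (auto intro: finite_subset)
      have "card (Y \<union> Z) = card Y + card Z" using a fY by (intro card_Un_disjoint) auto
      moreover have "(Y \<union> Z) \<inter> A = Y" using a by auto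
      ultimately show "x \<in> {U. U \<subseteq> X \<and> card U = i \<and> card (U \<inter> A) = j}"
        unfolding x
        using a assms by auto
    qed
    show "(\<lambda>U. (U \<inter> A, U - A)) ` {U. U \<subseteq> X \<and> card U = i \<and> card (U \<inter> A) = j} \<subseteq> ?L"
    proof
      fix x assume "x \<in> (\<lambda>U. (U \<inter> A, U - A)) ` {U. U \<subseteq> X \<and> card U = i \<and> card (U \<inter> A) = j}"
      then obtain U where a: "U \<subseteq> X" "i = card U" "j = card (U \<inter> A)" and x: "x = (U \<inter> A, U - A)" by auto
      have fU: "finite U" using a(1) assms(1) by (rule finite_subset)
      have "card U = card (U \<inter> A) + card (U - A)"
        using fU by (metis card_Int_Diff)
      then show "x \<in> ?L" unfolding x using a by auto
    qed
  qed
  then have "card {U. U \<subseteq> X \<and> card U = i \<and> card (U \<inter> A) = j} = card ?L"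
    by (simp add: bij_betw_same_card)
  also have "\<dots> = (card A choose j) * (card (X - A) choose (i - j))"
    by (simp add: card_cartesian_product n_subsets fA fXA)
  finally show ?thesis .
qed

lemma knows_from:
  assumes "m \<in> Msgs" "p \<in> m"
    and "\<forall>p'\<in>m - {p}. u \<in> fst (snd p') \<and> snd (snd (snd p')) < fst (snd (snd p'))"
  shows "knows Msgs u p"
proof (rule knows.decode[OF assms(1,2)])
  show "\<forall>p'\<in>m - {p}. knows Msgs u p'"
  proof
    fix p' assume "p' \<in> m - {p}"
    then have h: "u \<in> fst (snd p') \<and> snd (snd (snd p')) < fst (snd (snd p'))" using assms(3) by blast
    obtain f P n k where "p' = (f, P, n, k)" by (cases p')
    then show "knows Msgs u p'" using h by (simp add: knows.cached)
  qed
qed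

lemma valid_off:
  assumes us: "\<forall>T. T \<noteq> {} \<longrightarrow> ustar T \<in> T"
  shows "valid_offsets K Sf ustar (\<lambda>U u. card {v \<in> U - Sf - {ustar (U - Sf)}. v < u})
      (\<lambda>U u. card {v \<in> U - Sf - {ustar (U - Sf)}. v < u})"
  unfolding valid_offsets_def
proof (intro allI impI)
  fix U assume a: "U \<subseteq> {..<K} \<and> 2 \<le> card U \<and> 2 \<le> card (U - Sf)"
  have fU: "finite U" using a finite_subset[of U "{..<K}"] by simp
  define A where "A = U - Sf - {ustar (U - Sf)}"
  have fA: "finite A" using fU A_def by simp
  have c2: "2 \<le> card (U - Sf)" using a by blast
  have ne: "U - Sf \<noteq> {}"
  proof
    assume e: "U - Sf = {}"
    have "card (U - Sf) = card ({}::nat set)" by (rule arg_cong[of _ _ card, OF e])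
    then have "card (U - Sf) = 0" by (simp only: card.empty)
    with c2 show False by simp
  qed
  have "ustar (U - Sf) \<in> U - Sf" using spec[OF us, of "U - Sf"] ne by simp
  then have cA: "card A = card (U - Sf) - 1" using fU A_def by (simp add: card_Diff_singleton)
  have "inj_on (\<lambda>u. card {v \<in> A. v < u}) A" by (rule rank_inj[OF fA])
  moreover have "\<forall>u\<in>A. card {v \<in> A. v < u} < card (U - Sf) - 1"
    using rank_lt[OF fA] cA by simp
  ultimately show "inj_on (\<lambda>u. card {v \<in> U - Sf - {ustar (U - Sf)}. v < u}) (U - Sf - {ustar (U - Sf)}) \<and>
       (\<forall>u\<in>U - Sf - {ustar (U - Sf)}.
           card {v \<in> U - Sf - {ustar (U - Sf)}. v < u} < card (U - Sf) - 1 \<and>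
           card {v \<in> U - Sf - {ustar (U - Sf)}. v < u} < card (U - Sf) - 1)"
    unfolding A_def by simp
qed

lemma recov:
  assumes us: "\<forall>T. T \<noteq> {} \<longrightarrow> ustar T \<in> T" and w: "w < K"
    and P: "P \<subseteq> {..<K}" "\<not> P \<subseteq> Sf"
    and off: "off = (\<lambda>U u. card {v \<in> U - Sf - {ustar (U - Sf)}. v < u})"
    and Msgs: "Msgs = (\<lambda>(U, u). msg Sf \<omega> ustar off off U u) ` tx_index K Sf"
  shows "recovered Msgs w (\<omega> w) P"
proof (cases "w \<in> P")
  case True
  then show ?thesis unfolding recovered_def
    by (intro exI[of _ 1]) (auto intro: knows.cached)
next
  case False
  define U where "U = insert w P"
  obtain x where x: "x \<in> P" "x \<notin> Sf" using P by auto
  have UK: "U \<subseteq> {..<K}" using P w U_def by auto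
  have fU: "finite U" using finite_subset[OF UK] by simp
  have xw: "x \<noteq> w" using x False by auto
  have wU: "w \<in> U" "x \<in> U" using U_def x by auto
  have "card {w, x} \<le> card U" using fU wU by (intro card_mono) auto
  then have cU: "2 \<le> card U" using xw by simp
  have UP: "U - {w} = P" using False U_def by auto
  define T where "T = U - Sf"
  have xT: "x \<in> T" using x wU T_def by auto
  have fT: "finite T" using fU T_def by auto
  have "card T \<noteq> 0" using xT fT by auto
  then have t1: "1 \<le> card T" by simp
  have inM: "msg Sf \<omega> ustar off off U y \<in> Msgs" if "y \<in> T" for y
  proof -
    have "(U, y) \<in> tx_index K Sf" using UK cU that T_def unfolding tx_index_def by auto
    then show ?thesis unfolding Msgs by (intro image_eqI[where x="(U,y)"]) auto
  qed
  show ?thesis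
  proof (cases "card T = 1")
    case True
    then obtain y where "T = {y}" by (rule card_1_singletonE)
    then have Tx: "T = {x}" using xT by simp
    let ?m = "msg Sf \<omega> ustar off off U x"
    have m: "?m = {(\<omega> v, U - {v}, 1, 0) | v. v \<in> U \<and> v \<noteq> x}"
      using True unfolding T_def msg_def Let_def by simp
    have pm: "(\<omega> w, P, 1, 0) \<in> ?m" unfolding m using UP wU xw by blast
    have "knows Msgs w (\<omega> w, P, 1, 0)"
    proof (rule knows_from[OF inM[OF xT] pm], rule ballI)
      fix p' assume "p' \<in> ?m - {(\<omega> w, P, 1, 0)}"
      then obtain v where v: "p' = (\<omega> v, U - {v}, 1, 0)" "v \<in> U" "v \<noteq> x" "p' \<noteq> (\<omega> w, P, 1, 0)"
        unfolding m by blast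
      then have "v \<noteq> w" using UP by auto
      then show "w \<in> fst (snd p') \<and> snd (snd (snd p')) < fst (snd (snd p'))" using v wU by simp
    qed
    then show ?thesis unfolding recovered_def by (intro exI[of _ 1]) auto
  next
    case False
    then have t2: "2 \<le> card T" using t1 by auto
    define u0 where "u0 = ustar T"
    have "T \<noteq> {}" using xT by auto
    then have u0T: "u0 \<in> T" using us u0_def by auto
    define A where "A = T - {u0}"
    have fA: "finite A" using fT A_def by auto
    have cA: "card A = card T - 1" using u0T fT A_def by simp
    have offU: "off U = (\<lambda>u. card {v \<in> A. v < u})"
      using off A_def u0_def T_def by simp
    have lt: "\<forall>v\<in>A. off U v < card T - 1" using rank_lt[OF fA] cA offU by simp
    have "knows Msgs w (\<omega> w, P, card T - 1, k)" if k: "k < card T - 1" for k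
    proof -
      have "k \<in> off U ` A" unfolding offU rank_surj[OF fA] using k cA by simp
      then obtain u where uA: "u \<in> A" and uk: "off U u = k" by auto
      have uT: "u \<in> T" "u \<noteq> u0" using uA A_def by auto
      show ?thesis
      proof (cases "u = w")
        case False
        let ?m = "msg Sf \<omega> ustar off off U u"
        have uu0: "u \<noteq> ustar (U - Sf)" using uT u0_def T_def by auto
        have m: "?m = {(\<omega> v, U - {v}, card T - 1, off U u) | v. v \<in> U \<and> v \<noteq> u}"
          using \<open>card T \<noteq> 1\<close> uu0 unfolding T_def msg_def Let_def by simp
        have pm: "(\<omega> w, P, card T - 1, k) \<in> ?m" unfolding m using UP wU False uk by blast
        show ?thesis
        proof (rule knows_from[OF inM[OF uT(1)] pm], rule ballI)
          fix p' assume "p' \<in> ?m - {(\<omega> w, P, card T - 1, k)}"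
          then obtain v where v: "p' = (\<omega> v, U - {v}, card T - 1, off U u)" "v \<in> U" "v \<noteq> u"
              "p' \<noteq> (\<omega> w, P, card T - 1, k)"
            unfolding m by blast
          then have "v \<noteq> w" using UP uk by auto
          then show "w \<in> fst (snd p') \<and> snd (snd (snd p')) < fst (snd (snd p'))" using v wU uk k by simp
        qed
      next
        case True
        let ?m = "msg Sf \<omega> ustar off off U u0"
        have m: "?m = {(\<omega> v, U - {v}, card T - 1, off U v) | v. v \<in> T \<and> v \<noteq> u0}"
          using \<open>card T \<noteq> 1\<close> unfolding u0_def T_def msg_def Let_def by simp
        have pm: "(\<omega> w, P, card T - 1, k) \<in> ?m" unfolding m using UP True uk uT by blast
        show ?thesis
        proof (rule knows_from[OF inM[OF u0T] pm], rule ballI)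
          fix p' assume "p' \<in> ?m - {(\<omega> w, P, card T - 1, k)}"
          then obtain v where v: "p' = (\<omega> v, U - {v}, card T - 1, off U v)" "v \<in> T" "v \<noteq> u0"
              "p' \<noteq> (\<omega> w, P, card T - 1, k)"
            unfolding m by blast
          have "v \<in> A" using v A_def by auto
          then have "off U v < card T - 1" using lt by auto
          moreover have "v \<noteq> w" using v UP True uk by auto
          ultimately show "w \<in> fst (snd p') \<and> snd (snd (snd p')) < fst (snd (snd p'))" using v wU by simp
        qed
      qed
    qed
    then show ?thesis unfolding recovered_def using t2 by (intro exI[of _ "card T - 1"]) auto
  qed
qed

definition hh :: "nat \<Rightarrow> real" where
  "hh t = (if t = 0 then 0 else if t = 1 then 1 else real t / real (t - 1))"

lemma Max_const:
  assumes "finite m" "m \<noteq> {}" "\<forall>p\<in>m. f p = (c::real)"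
  shows "Max (f ` m) = c"
proof -
  have "f ` m = {c}" using assms by auto
  then show ?thesis by simp
qed

lemma mlen_msg:
  assumes fU: "finite U" and cU: "2 \<le> card U" and u: "u \<in> U - Sf"
  shows "mlen K q r I (msg Sf \<omega> ustar off cof U u) =
     q ^ (card U - 1) * (1 - q) ^ (K - (card U - 1)) * real I / r
       / real (if card (U - Sf) = 1 then 1 else card (U - Sf) - 1)"
proof -
  define t where "t = card (U - Sf)"
  define V where "V = q ^ (card U - 1) * (1 - q) ^ (K - (card U - 1)) * real I / r"
  have fT: "finite (U - Sf)" using fU by simp
  have "t \<noteq> 0" using u fT t_def by auto
  have pl: "plen K q r I (\<omega> v, U - {v}, n, k) = V / real n" if "v \<in> U" for v n k
  proof -
    have "card (U - {v}) = card U - 1" using that fU by simp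
    then show ?thesis unfolding plen_def blen_def V_def by simp
  qed
  have ex: "\<exists>v. v \<in> U \<and> v \<noteq> u"
  proof (rule ccontr)
    assume "\<not> ?thesis"
    then have "U \<subseteq> {u}" by auto
    then have "card U \<le> card {u}" by (intro card_mono) auto
    then show False using cU by simp
  qed
  show ?thesis
  proof (cases "t = 1")
    case True
    let ?m = "{(\<omega> v, U - {v}, 1::nat, 0::nat) | v. v \<in> U \<and> v \<noteq> u}"
    have m: "msg Sf \<omega> ustar off cof U u = ?m"
      using True unfolding t_def msg_def Let_def by simp
    have "Max (plen K q r I ` ?m) = V"
    proof (rule Max_const)
      show "finite ?m" using fU by (intro finite_image_set) simp
      show "?m \<noteq> {}" using ex by blast
      show "\<forall>p\<in>?m. plen K q r I p = V" using pl by auto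
    qed
    then show ?thesis unfolding mlen_def m using True V_def t_def by simp
  next
    case False
    show ?thesis
    proof (cases "u = ustar (U - Sf)")
      case True
      let ?m = "{(\<omega> w, U - {w}, t - 1, cof U w) | w. w \<in> U - Sf \<and> w \<noteq> u}"
      have m: "msg Sf \<omega> ustar off cof U u = ?m"
        using False True unfolding t_def msg_def Let_def by simp
      have ex2: "\<exists>w. w \<in> U - Sf \<and> w \<noteq> u"
      proof (rule ccontr)
        assume "\<not> ?thesis"
        then have "U - Sf \<subseteq> {u}" by auto
        then have "card (U - Sf) \<le> card {u}" by (intro card_mono) auto
        then show False using False \<open>t \<noteq> 0\<close> t_def by simp
      qed
      have "Max (plen K q r I ` ?m) = V / real (t - 1)"
      proof (rule Max_const)
        show "finite ?m" using fU by (intro finite_image_set) simp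
        show "?m \<noteq> {}" using ex2 by blast
        show "\<forall>p\<in>?m. plen K q r I p = V / real (t - 1)" using pl by auto
      qed
      then show ?thesis unfolding mlen_def m using False V_def t_def by simp
    next
      case True2: False
      let ?m = "{(\<omega> v, U - {v}, t - 1, off U u) | v. v \<in> U \<and> v \<noteq> u}"
      have m: "msg Sf \<omega> ustar off cof U u = ?m"
        using False True2 unfolding t_def msg_def Let_def by simp
      have "Max (plen K q r I ` ?m) = V / real (t - 1)"
      proof (rule Max_const)
        show "finite ?m" using fU by (intro finite_image_set) simp
        show "?m \<noteq> {}" using ex by blast
        show "\<forall>p\<in>?m. plen K q r I p = V / real (t - 1)" using pl by auto
      qed
      then show ?thesis unfolding mlen_def m using False V_def t_def by simp
    qed
  qed
qed

lemma hh_mult: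
  "real t * (V / real (if t = 1 then 1 else t - 1)) = hh t * V"
  unfolding hh_def by auto


lemma Rsf_eq:
  assumes "2 \<le> i"
  shows "(\<Sum>j=0..i. real (S choose j) * real ((K - S) choose (i - j)) * hh (i - j)) = Rsf K S i"
proof -
  obtain k where i: "i = Suc (Suc k)" using assms by (metis add_2_eq_Suc le_Suc_ex)
  have "(\<Sum>j=0..i. real (S choose j) * real ((K - S) choose (i - j)) * hh (i - j))
      = (\<Sum>j=0..k. real (S choose j) * real ((K - S) choose (i - j)) * hh (i - j))
        + real (S choose Suc k) * real ((K - S) choose 1) * hh 1
        + real (S choose i) * real ((K - S) choose 0) * hh 0"
    unfolding i by (simp add: sum.atLeast0_atMost_Suc)
  also have "\<dots> = (\<Sum>j=0..k. real (S choose j) * real ((K - S) choose (i - j)) * real (i - j) / real (i - j - 1))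
        + real (K - S) * real (S choose (i - 1))"
  proof -
    have "(\<Sum>j=0..k. real (S choose j) * real ((K - S) choose (i - j)) * hh (i - j))
       = (\<Sum>j=0..k. real (S choose j) * real ((K - S) choose (i - j)) * real (i - j) / real (i - j - 1))"
      by (rule sum.cong) (auto simp: hh_def i)
    then show ?thesis by (simp add: hh_def i)
  qed
  also have "\<dots> = Rsf K S i" unfolding Rsf_def using i by simp
  finally show ?thesis .
qed

lemma inner_count:
  assumes Sf: "Sf \<subseteq> {..<K}" "card Sf = S"
  shows "(\<Sum>U \<in> {U. U \<subseteq> {..<K} \<and> card U = i}. hh (card (U - Sf)))
       = (\<Sum>j=0..i. real (S choose j) * real ((K - S) choose (i - j)) * hh (i - j))"
proof -
  let ?C = "{U. U \<subseteq> {..<K} \<and> card U = i}"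
  have fC: "finite ?C" by (rule finite_subset[of _ "Pow {..<K}"]) auto
  have cd: "card (U - Sf) = i - card (U \<inter> Sf)" if "U \<in> ?C" for U
  proof -
    have "finite U" using that finite_subset[of U "{..<K}"] by auto
    then have "card U = card (U \<inter> Sf) + card (U - Sf)" by (metis card_Int_Diff)
    moreover have "card U = i" using that by simp
    ultimately show ?thesis by linarith
  qed
  have le: "card (U \<inter> Sf) \<le> i" if "U \<in> ?C" for U
  proof -
    have "finite U" using that finite_subset[of U "{..<K}"] by auto
    then have "card (U \<inter> Sf) \<le> card U" by (intro card_mono) auto
    then show ?thesis using that by simp
  qed
  have "(\<Sum>U \<in> ?C. hh (card (U - Sf)))
      = (\<Sum>j=0..i. \<Sum>U \<in> {U \<in> ?C. card (U \<inter> Sf) = j}. hh (card (U - Sf)))"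
    by (rule sum.group[symmetric]) (use fC le in auto)
  also have "\<dots> = (\<Sum>j=0..i. real (card {U. U \<subseteq> {..<K} \<and> card U = i \<and> card (U \<inter> Sf) = j}) * hh (i - j))"
  proof (rule sum.cong[OF refl])
    fix j assume "j \<in> {0..i}"
    have "(\<Sum>U \<in> {U \<in> ?C. card (U \<inter> Sf) = j}. hh (card (U - Sf)))
        = (\<Sum>U \<in> {U \<in> ?C. card (U \<inter> Sf) = j}. hh (i - j))"
      by (rule sum.cong) (use cd in auto)
    also have "\<dots> = real (card {U \<in> ?C. card (U \<inter> Sf) = j}) * hh (i - j)" by simp
    also have "{U \<in> ?C. card (U \<inter> Sf) = j} = {U. U \<subseteq> {..<K} \<and> card U = i \<and> card (U \<inter> Sf) = j}" by auto
    finally show "(\<Sum>U \<in> {U \<in> ?C. card (U \<inter> Sf) = j}. hh (card (U - Sf)))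
        = real (card {U. U \<subseteq> {..<K} \<and> card U = i \<and> card (U \<inter> Sf) = j}) * hh (i - j)"
      by (simp add: conj_assoc)
  qed
  also have "\<dots> = (\<Sum>j=0..i. real (S choose j) * real ((K - S) choose (i - j)) * hh (i - j))"
  proof (rule sum.cong[OF refl])
    fix j assume "j \<in> {0..i}"
    then have "card {U. U \<subseteq> {..<K} \<and> card U = i \<and> card (U \<inter> Sf) = j}
       = (card Sf choose j) * (card ({..<K} - Sf) choose (i - j))"
      using Sf by (intro count_split) auto
    also have "card ({..<K} - Sf) = K - S" using Sf by (simp add: card_Diff_subset finite_subset)
    finally show "real (card {U. U \<subseteq> {..<K} \<and> card U = i \<and> card (U \<inter> Sf) = j}) * hh (i - j)
       = real (S choose j) * real ((K - S) choose (i - j)) * hh (i - j)" using Sf by simp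
  qed
  finally show ?thesis .
qed


lemma decode_sum:
  assumes Sf: "Sf \<subseteq> {..<K}" "card Sf = S" and r: "r > 0"
    and root: "(1 - q) ^ (K - S) = 1 - r"
  shows "(\<Sum>P \<in> {P. P \<subseteq> {..<K} \<and> \<not> P \<subseteq> Sf}. blen K q r I P) = real I"
proof -
  have fS: "finite Sf" using finite_subset[OF Sf(1)] by simp
  have SK: "S \<le> K" using Sf card_mono[of "{..<K}" Sf] by simp
  let ?g = "\<lambda>P. q ^ card P * (1 - q) ^ (K - card P)"
  have all: "(\<Sum>P\<in>Pow {..<K}. ?g P) = 1"
    using pow_binom[of "{..<K}" q "1 - q"] by simp
  have sub: "(\<Sum>P\<in>Pow Sf. ?g P) = (1 - q) ^ (K - S)"
  proof -
    have "(\<Sum>P\<in>Pow Sf. ?g P) = (\<Sum>P\<in>Pow Sf. (1 - q) ^ (K - S) * (q ^ card P * (1 - q) ^ (card Sf - card P)))"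
    proof (rule sum.cong[OF refl])
      fix P assume "P \<in> Pow Sf"
      then have "card P \<le> card Sf" using fS by (intro card_mono) auto
      then have "card P \<le> S" using Sf by simp
      then have "K - card P = (K - S) + (card Sf - card P)" using SK Sf by simp
      then show "?g P = (1 - q) ^ (K - S) * (q ^ card P * (1 - q) ^ (card Sf - card P))"
        by (simp add: power_add)
    qed
    also have "\<dots> = (1 - q) ^ (K - S)"
      using pow_binom[OF fS, of q "1 - q"] by (simp add: sum_distrib_left[symmetric])
    finally show ?thesis .
  qed
  have split: "Pow {..<K} = Pow Sf \<union> {P. P \<subseteq> {..<K} \<and> \<not> P \<subseteq> Sf}" using Sf(1) by blast
  have fN: "finite {P. P \<subseteq> {..<K} \<and> \<not> P \<subseteq> Sf}" by (rule finite_subset[of _ "Pow {..<K}"]) auto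
  have "(\<Sum>P\<in>Pow {..<K}. ?g P) = (\<Sum>P\<in>Pow Sf. ?g P) + (\<Sum>P \<in> {P. P \<subseteq> {..<K} \<and> \<not> P \<subseteq> Sf}. ?g P)"
    unfolding split by (rule sum.union_disjoint) (use fS fN in blast)+
  then have e: "(\<Sum>P \<in> {P. P \<subseteq> {..<K} \<and> \<not> P \<subseteq> Sf}. ?g P) = r"
    using all sub root by linarith
  have "(\<Sum>P \<in> {P. P \<subseteq> {..<K} \<and> \<not> P \<subseteq> Sf}. blen K q r I P)
     = (\<Sum>P \<in> {P. P \<subseteq> {..<K} \<and> \<not> P \<subseteq> Sf}. ?g P) * (real I / r)"
    unfolding sum_distrib_right
  proof (rule sum.cong[OF refl])
    fix P show "blen K q r I P = ?g P * (real I / r)" unfolding blen_def by simp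
  qed
  also have "\<dots> = real I" using e r by simp
  finally show ?thesis .
qed

lemma rate_sum:
  assumes Sf: "Sf \<subseteq> {..<K}" "card Sf = S" and I: "0 < I"
  shows "scheme_rate K q r I Sf \<omega> ustar off cof
     = (1 / r) * (\<Sum>i = 2..K. Rsf K S i * q ^ (i - 1) * (1 - q) ^ (K - i + 1))"
proof -
  define UU where "UU = {U. U \<subseteq> {..<K} \<and> 2 \<le> card U}"
  define Lc where "Lc i = q ^ (i - 1) * (1 - q) ^ (K - (i - 1)) * real I / r" for i
  have fUU: "finite UU" unfolding UU_def by (rule finite_subset[of _ "Pow {..<K}"]) auto
  have fin: "finite U" if "U \<in> UU" for U
    using that finite_subset[of U "{..<K}"] UU_def by auto
  have tx: "tx_index K Sf = Sigma UU (\<lambda>U. U - Sf)" unfolding tx_index_def UU_def by auto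
  have "(\<Sum>(U, u) \<in> tx_index K Sf. mlen K q r I (msg Sf \<omega> ustar off cof U u))
      = (\<Sum>U\<in>UU. \<Sum>u\<in>U - Sf. mlen K q r I (msg Sf \<omega> ustar off cof U u))"
  proof -
    have fD: "\<forall>U\<in>UU. finite (U - Sf)" using fin by simp
    have "(\<Sum>U\<in>UU. \<Sum>u\<in>U - Sf. mlen K q r I (msg Sf \<omega> ustar off cof U u))
       = (\<Sum>(U, u) \<in> Sigma UU (\<lambda>U. U - Sf). mlen K q r I (msg Sf \<omega> ustar off cof U u))"
      by (rule sum.Sigma[OF fUU fD, of "\<lambda>U u. mlen K q r I (msg Sf \<omega> ustar off cof U u)"])
    then show ?thesis unfolding tx by (rule sym)
  qed
  also have "\<dots> = (\<Sum>U\<in>UU. hh (card (U - Sf)) * Lc (card U))"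
  proof (rule sum.cong[OF refl])
    fix U assume U: "U \<in> UU"
    have fU: "finite U" using U by (rule fin)
    have cU: "2 \<le> card U" using U unfolding UU_def by simp
    let ?c = "Lc (card U) / real (if card (U - Sf) = 1 then 1 else card (U - Sf) - 1)"
    have "(\<Sum>u\<in>U - Sf. mlen K q r I (msg Sf \<omega> ustar off cof U u)) = (\<Sum>u\<in>U - Sf. ?c)"
    proof (rule sum.cong[OF refl])
      fix u assume u: "u \<in> U - Sf"
      show "mlen K q r I (msg Sf \<omega> ustar off cof U u) = ?c"
        unfolding Lc_def by (rule mlen_msg[OF fU cU u])
    qed
    also have "\<dots> = real (card (U - Sf)) * ?c" by (rule sum_constant)
    also have "\<dots> = hh (card (U - Sf)) * Lc (card U)" by (rule hh_mult)
    finally show "(\<Sum>u\<in>U - Sf. mlen K q r I (msg Sf \<omega> ustar off cof U u)) = hh (card (U - Sf)) * Lc (card U)" .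
  qed
  also have "\<dots> = (\<Sum>i=2..K. \<Sum>U\<in>{U\<in>UU. card U = i}. hh (card (U - Sf)) * Lc (card U))"
  proof (rule sum.group[symmetric])
    show "finite UU" by (rule fUU)
    show "finite {2..K}" by simp
    show "card ` UU \<subseteq> {2..K}"
    proof
      fix x assume "x \<in> card ` UU"
      then obtain U where U: "U \<in> UU" "x = card U" by auto
      then have "card U \<le> card {..<K}" using UU_def by (intro card_mono) auto
      then show "x \<in> {2..K}" using U UU_def by auto
    qed
  qed
  also have "\<dots> = (\<Sum>i=2..K. Lc i * Rsf K S i)"
  proof (rule sum.cong[OF refl])
    fix i assume i: "i \<in> {2..K}"
    have "{U\<in>UU. card U = i} = {U. U \<subseteq> {..<K} \<and> card U = i}" using i UU_def by auto
    then have "(\<Sum>U\<in>{U\<in>UU. card U = i}. hh (card (U - Sf)) * Lc (card U))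
       = (\<Sum>U\<in>{U. U \<subseteq> {..<K} \<and> card U = i}. hh (card (U - Sf)) * Lc i)" by simp
    also have "\<dots> = Lc i * (\<Sum>U\<in>{U. U \<subseteq> {..<K} \<and> card U = i}. hh (card (U - Sf)))"
      by (simp add: sum_distrib_left mult.commute)
    also have "\<dots> = Lc i * Rsf K S i" using inner_count[OF Sf, of i] Rsf_eq[of i S K] i by simp
    finally show "(\<Sum>U\<in>{U\<in>UU. card U = i}. hh (card (U - Sf)) * Lc (card U)) = Lc i * Rsf K S i" .
  qed
  finally have tot: "(\<Sum>(U, u) \<in> tx_index K Sf. mlen K q r I (msg Sf \<omega> ustar off cof U u))
      = (\<Sum>i=2..K. Lc i * Rsf K S i)" .
  have "scheme_rate K q r I Sf \<omega> ustar off cof = (\<Sum>i=2..K. Lc i * Rsf K S i) / real I"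
    unfolding scheme_rate_def tot ..
  also have "\<dots> = (\<Sum>i=2..K. (1 / r) * (Rsf K S i * q ^ (i - 1) * (1 - q) ^ (K - i + 1)))"
    unfolding sum_divide_distrib
  proof (rule sum.cong[OF refl])
    fix i assume i: "i \<in> {2..K}"
    then have "K - (i - 1) = K - i + 1" by auto
    then show "Lc i * Rsf K S i / real I = (1 / r) * (Rsf K S i * q ^ (i - 1) * (1 - q) ^ (K - i + 1))"
      unfolding Lc_def using I by simp
  qed
  also have "\<dots> = (1 / r) * (\<Sum>i = 2..K. Rsf K S i * q ^ (i - 1) * (1 - q) ^ (K - i + 1))"
    by (simp add: sum_distrib_left)
  finally show ?thesis .
qed


theorem theorem4:
  fixes K S N I :: nat and M r :: real and Sf :: "nat set"
    and \<omega> :: "nat \<Rightarrow> nat" and ustar :: "nat set \<Rightarrow> nat"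
  assumes "Sf \<subseteq> {..<K}" and "card Sf = S"
    and "0 < N" and "0 \<le> M" and "M \<le> real N" and "0 < I"
    and "0 < r" and "r < 1"
    and "M * (real K - real S) / real N > 1"
    and "(\<Sum>i = 0..<K - S. real ((K - S) choose i) * (- M / real N) ^ (K - S - i)
            * r ^ (K - S - 1 - i)) + 1 = 0"
    and "\<forall>u < K. \<omega> u < N"
    and "\<forall>T. T \<noteq> {} \<longrightarrow> ustar T \<in> T"
  shows "\<exists>off cof. valid_offsets K Sf ustar off cof \<and>
           (let q = M * r / real N;
                Msgs = (\<lambda>(U, u). msg Sf \<omega> ustar off cof U u) ` tx_index K Sf
            in (\<forall>u < K. decodes K q r I Msgs u (\<omega> u)) \<and>
               scheme_rate K q r I Sf \<omega> ustar off cof = Rach K S M N r)"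
proof -
  note Sf = assms(1,2)
  define off where "off = (\<lambda>U u. card {v \<in> U - Sf - {ustar (U - Sf)}. v < u})"
  define q where "q = M * r / real N"
  define Msgs where "Msgs = (\<lambda>(U, u). msg Sf \<omega> ustar off off U u) ` tx_index K Sf"
  have KS: "0 < K - S"
  proof (rule ccontr)
    assume "\<not> 0 < K - S"
    then have "real K - real S \<le> 0" by simp
    then have "M * (real K - real S) \<le> 0" using assms(4) by (simp add: mult_nonneg_nonpos)
    then have "M * (real K - real S) / real N \<le> 0" using assms(3) by (simp add: divide_nonpos_pos)
    then show False using assms(9) by simp
  qed
  have root0: "(1 - M / real N * r) ^ (K - S) = 1 - r"
  proof (rule root_eq[OF KS])
    show "(\<Sum>i = 0..<K - S. real ((K - S) choose i) * (- (M / real N)) ^ (K - S - i)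
            * r ^ (K - S - 1 - i)) + 1 = 0"
      using assms(10) by (simp only: minus_divide_left)
  qed
  have root: "(1 - q) ^ (K - S) = 1 - r" using root0 unfolding q_def by simp
  have q0: "0 \<le> q" unfolding q_def using assms(3,4,7) by simp
  have q1: "q \<le> 1"
  proof -
    have "M * r \<le> M * 1" using assms(4,8) by (intro mult_left_mono) auto
    also have "\<dots> \<le> real N" using assms(5) by simp
    finally show ?thesis unfolding q_def using assms(3) by simp
  qed
  have dec: "decodes K q r I Msgs u (\<omega> u)" if u: "u < K" for u
  proof -
    let ?R = "{P. P \<subseteq> {..<K} \<and> recovered Msgs u (\<omega> u) P}"
    let ?N = "{P. P \<subseteq> {..<K} \<and> \<not> P \<subseteq> Sf}"
    have "real I = (\<Sum>P \<in> ?N. blen K q r I P)"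
      using decode_sum[OF Sf assms(7) root] by simp
    also have "\<dots> \<le> (\<Sum>P \<in> ?R. blen K q r I P)"
    proof (rule sum_mono2)
      show "finite ?R" by (rule finite_subset[of _ "Pow {..<K}"]) auto
      show "?N \<subseteq> ?R"
      proof
        fix P assume "P \<in> ?N"
        then have P: "P \<subseteq> {..<K}" "\<not> P \<subseteq> Sf" by auto
        have "recovered Msgs u (\<omega> u) P"
          by (rule recov[OF assms(12) u P off_def Msgs_def])
        then show "P \<in> ?R" using P by simp
      qed
      fix P show "0 \<le> blen K q r I P"
        unfolding blen_def using q0 q1 assms(7) by simp
    qed
    finally show ?thesis unfolding decodes_def .
  qed
  have rate: "scheme_rate K q r I Sf \<omega> ustar off off = Rach K S M N r"
    unfolding rate_sum[OF Sf assms(6)] Rach_def q_def ..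
  have vo: "valid_offsets K Sf ustar off off"
    unfolding off_def by (rule valid_off[OF assms(12)])
  show ?thesis
    apply (rule exI[of _ off], rule exI[of _ off])
    using vo dec rate unfolding Let_def q_def[symmetric] Msgs_def[symmetric] by blast
qed

end
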